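(* Let $n\ge 1$, $k\ge 1$ be integers, $V$ a complex vector space of dimension $2n+2$, $I$ a complex vector space of dimension $k$, and $(W,J)$ a complex symplectic vector space of dimension $2n+2k$. For $A\in\mathrm{Hom}(V^*\otimes I^*,W)$ let $A^t\colon W\to V\otimes I$ be the composition of $W\to W^*$, $w\mapsto J(w,\cdot)$, with the dual map $A^*\colon W^*\to V\otimes I$, and let $$\Delta_A=(\mathrm{id}_V\otimes\pi)\circ(A^t\otimes\mathrm{id}_{S^nI})\colon W\otimes S^nI\to V\otimes S^{n+1}I,$$ where $\pi\colon I\otimes S^nI\to S^{n+1}I$ is the natural multiplication map. (Both spaces have dimension $(2n+2k)\binom{k+n-1}{n}=(2n+2)\binom{k+n}{n+1}$.) Let $D(A)=\det\Delta_A$ (computed in any fixed bases). If $A$ is degenerate, i.e. there exist $0\neq v\in V^*$ and $0\neq i\in I^*$ with $A(v\otimes i)=0$, then $D(A)=0$. *)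

theory Defs
  imports Complex_Main "Jordan_Normal_Form.Determinant"
begin

text \<open>Coordinates: V = C^(2n+2) with basis indices a < 2n+2, I = C^k with basis
indices b < k, W = C^(2n+2k) with basis indices j < 2n+2k.
A map A in Hom(V* (x) I*, W) is given by its coefficients: A a b j is the j-th
coordinate of A(e_a^* (x) e_b^*).  The symplectic form J is a (2n+2k)x(2n+2k)
skew-symmetric invertible complex matrix, J(w,u) = sum w_j J_jl u_l.
S^d I has the monomial basis indexed by multi-indices of degree d.\<close>

definition multi_idx :: "nat \<Rightarrow> nat \<Rightarrow> (nat \<Rightarrow> nat) set" where
  "multi_idx k d = {\<alpha>. (\<forall>b\<ge>k. \<alpha> b = 0) \<and> sum \<alpha> {..<k} = d}"

definition is_symplectic_form :: "nat \<Rightarrow> complex mat \<Rightarrow> bool" where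
  "is_symplectic_form m J \<longleftrightarrow> J \<in> carrier_mat m m \<and> transpose_mat J = - J \<and> det J \<noteq> 0"

text \<open>J(e_j, A(e_a^* (x) e_b^*)), i.e. the (a,b)-coordinate of A^t(e_j).\<close>
definition At_coeff :: "nat \<Rightarrow> complex mat \<Rightarrow> (nat \<Rightarrow> nat \<Rightarrow> nat \<Rightarrow> complex)
    \<Rightarrow> nat \<Rightarrow> nat \<Rightarrow> nat \<Rightarrow> complex" where
  "At_coeff m J A j a b = (\<Sum>l<m. J $$ (j, l) * A a b l)"

text \<open>Matrix entry of Delta_A: row (a, beta) with |beta| = n+1 (basis of V (x) S^(n+1) I),
column (j, alpha) with |alpha| = n (basis of W (x) S^n I).
Delta_A(e_j (x) x^alpha) = sum_(a,b) J(e_j, A(a,b)) e_a (x) x^(alpha + e_b).\<close>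
definition Delta_entry :: "nat \<Rightarrow> nat \<Rightarrow> complex mat \<Rightarrow> (nat \<Rightarrow> nat \<Rightarrow> nat \<Rightarrow> complex)
    \<Rightarrow> nat \<times> (nat \<Rightarrow> nat) \<Rightarrow> nat \<times> (nat \<Rightarrow> nat) \<Rightarrow> complex" where
  "Delta_entry m k J A r c =
     (\<Sum>b<k.
        (if snd r = (snd c)(b := snd c b + 1) then At_coeff m J A (fst c) (fst r) b else 0))"

definition Delta_rows :: "nat \<Rightarrow> nat \<Rightarrow> (nat \<times> (nat \<Rightarrow> nat)) set" where
  "Delta_rows n k = {..<2*n+2} \<times> multi_idx k (n+1)"

definition Delta_cols :: "nat \<Rightarrow> nat \<Rightarrow> (nat \<times> (nat \<Rightarrow> nat)) set" where
  "Delta_cols n k = {..<2*n+2*k} \<times> multi_idx k n"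

definition Delta_mat :: "nat \<Rightarrow> nat \<Rightarrow> complex mat \<Rightarrow> (nat \<Rightarrow> nat \<Rightarrow> nat \<Rightarrow> complex)
    \<Rightarrow> (nat \<Rightarrow> nat \<times> (nat \<Rightarrow> nat)) \<Rightarrow> (nat \<Rightarrow> nat \<times> (nat \<Rightarrow> nat)) \<Rightarrow> complex mat" where
  "Delta_mat n k J A r c = (let N = card (Delta_rows n k) in
     mat N N (\<lambda>(i, i'). Delta_entry (2*n+2*k) k J A (r i) (c i')))"

definition degenerate :: "nat \<Rightarrow> nat \<Rightarrow> (nat \<Rightarrow> nat \<Rightarrow> nat \<Rightarrow> complex) \<Rightarrow> bool" where
  "degenerate n k A \<longleftrightarrow> (\<exists>v i. (\<exists>a<2*n+2. v a \<noteq> 0) \<and> (\<exists>b<k. i b \<noteq> 0) \<and>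
     (\<forall>j<2*n+2*k. (\<Sum>a<2*n+2. \<Sum>b<k. v a * i b * A a b j) = 0))"

end

theory Submission
  imports Defs
begin

definition mon :: "nat \<Rightarrow> (nat \<Rightarrow> complex) \<Rightarrow> (nat \<Rightarrow> nat) \<Rightarrow> complex" where
  "mon k w \<beta> = (\<Prod>b<k. w b ^ \<beta> b)"

lemma mon_upd: assumes "b < k" shows "mon k w (\<alpha>(b := \<alpha> b + 1)) = mon k w \<alpha> * w b"
proof -
  have "mon k w (\<alpha>(b := \<alpha> b + 1)) = (\<Prod>x<k. (if x = b then w b else 1) * w x ^ \<alpha> x)"
    unfolding mon_def by (rule prod.cong) auto
  also have "\<dots> = (\<Prod>x<k. (if x = b then w b else 1)) * mon k w \<alpha>"
    unfolding mon_def prod.distrib ..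
  also have "(\<Prod>x<k. (if x = b then w b else 1)) = w b"
    using assms by (simp add: prod.delta)
  finally show ?thesis by (metis mult.commute)
qed

lemma multi_idx_upd: assumes "\<alpha> \<in> multi_idx k n" "b < k"
  shows "\<alpha>(b := \<alpha> b + 1) \<in> multi_idx k (n+1)"
proof -
  have "sum (\<alpha>(b := \<alpha> b + 1)) {..<k} = sum (\<lambda>x. \<alpha> x + (if x = b then 1 else 0)) {..<k}"
    by (rule sum.cong) auto
  also have "\<dots> = n + 1" using assms by (simp add: sum.distrib multi_idx_def)
  finally show ?thesis using assms by (auto simp: multi_idx_def)
qed

lemma finite_multi_idx_dummy: "finite (multi_idx k d)"
proof -
  have "multi_idx k d \<subseteq> {f. \<forall>x. (x \<in> {..<k} \<longrightarrow> f x \<in> {..d}) \<and> (x \<notin> {..<k} \<longrightarrow> f x = 0)}"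
  proof (clarsimp simp: multi_idx_def)
    fix f x assume "\<forall>b\<ge>k. f b = 0" "x < k" "d = sum f {..<k}"
    then show "f x \<le> sum f {..<k}" by (intro member_le_sum) auto
  qed
  then show ?thesis by (rule finite_subset) (rule finite_set_of_finite_funs; simp)
qed

lemma triple_swap: "(\<Sum>b\<in>Q. \<Sum>a\<in>P. \<Sum>l\<in>L. f b a l) = (\<Sum>l\<in>L. \<Sum>a\<in>P. \<Sum>b\<in>Q. f b a l)"
proof -
  have "(\<Sum>b\<in>Q. \<Sum>a\<in>P. \<Sum>l\<in>L. f b a l) = (\<Sum>b\<in>Q. \<Sum>l\<in>L. \<Sum>a\<in>P. f b a l)"
    by (rule sum.cong[OF refl], rule sum.swap)
  also have "\<dots> = (\<Sum>l\<in>L. \<Sum>b\<in>Q. \<Sum>a\<in>P. f b a l)" by (rule sum.swap)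
  also have "\<dots> = (\<Sum>l\<in>L. \<Sum>a\<in>P. \<Sum>b\<in>Q. f b a l)"
    by (rule sum.cong[OF refl], rule sum.swap)
  finally show ?thesis .
qed

lemma key:
  assumes x: "x \<in> Delta_cols n k"
    and hA: "\<forall>j<2*n+2*k. (\<Sum>a<2*n+2. \<Sum>b<k. v a * w b * A a b j) = 0"
  shows "(\<Sum>y\<in>Delta_rows n k. Delta_entry (2*n+2*k) k J A y x * (v (fst y) * mon k w (snd y))) = 0"
proof -
  obtain j \<alpha> where xe: "x = (j, \<alpha>)" and al: "\<alpha> \<in> multi_idx k n"
    using x unfolding Delta_cols_def by auto
  let ?m = "2*n+2*k"
  have "(\<Sum>y\<in>Delta_rows n k. Delta_entry ?m k J A y x * (v (fst y) * mon k w (snd y)))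
     = (\<Sum>y\<in>Delta_rows n k. \<Sum>b<k. (if snd y = \<alpha>(b := \<alpha> b + 1) then At_coeff ?m J A j (fst y) b * (v (fst y) * mon k w (snd y)) else 0))"
    unfolding Delta_entry_def xe by (auto simp: sum_distrib_right intro!: sum.cong)
  also have "\<dots> = (\<Sum>b<k. \<Sum>a<2*n+2. \<Sum>\<beta>\<in>multi_idx k (n+1). (if \<beta> = \<alpha>(b := \<alpha> b + 1) then At_coeff ?m J A j a b * (v a * mon k w \<beta>) else 0))"
    unfolding Delta_rows_def by (subst sum.swap) (simp add: sum.cartesian_product split_def)
  also have "\<dots> = (\<Sum>b<k. \<Sum>a<2*n+2. At_coeff ?m J A j a b * (v a * (mon k w \<alpha> * w b)))"
  proof (rule sum.cong[OF refl], rule sum.cong[OF refl])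
    fix b a assume b: "b \<in> {..<k}"
    have "\<alpha>(b := \<alpha> b + 1) \<in> multi_idx k (n+1)" using multi_idx_upd[OF al] b by auto
    then have "(\<Sum>\<beta>\<in>multi_idx k (n+1). (if \<beta> = \<alpha>(b := \<alpha> b + 1) then At_coeff ?m J A j a b * (v a * mon k w \<beta>) else 0))
       = At_coeff ?m J A j a b * (v a * mon k w (\<alpha>(b := \<alpha> b + 1)))"
      by (simp add: sum.delta' finite_multi_idx_dummy)
    then show "(\<Sum>\<beta>\<in>multi_idx k (n+1). (if \<beta> = \<alpha>(b := \<alpha> b + 1) then At_coeff ?m J A j a b * (v a * mon k w \<beta>) else 0))
       = At_coeff ?m J A j a b * (v a * (mon k w \<alpha> * w b))"
      using mon_upd b by auto
  qed
  also have "\<dots> = mon k w \<alpha> * (\<Sum>l<?m. J $$ (j, l) * (\<Sum>a<2*n+2. \<Sum>b<k. v a * w b * A a b l))"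
  proof -
    define P where "P = {..<2*n+2}"
    define Q where "Q = {..<k}"
    define L where "L = {..<?m}"
    have "(\<Sum>b\<in>Q. \<Sum>a\<in>P. At_coeff ?m J A j a b * (v a * (mon k w \<alpha> * w b)))
        = (\<Sum>b\<in>Q. \<Sum>a\<in>P. \<Sum>l\<in>L. mon k w \<alpha> * (J $$ (j, l) * (v a * w b * A a b l)))"
      unfolding At_coeff_def L_def[symmetric] sum_distrib_right by (simp add: mult_ac)
    also have "\<dots> = (\<Sum>l\<in>L. \<Sum>a\<in>P. \<Sum>b\<in>Q. mon k w \<alpha> * (J $$ (j, l) * (v a * w b * A a b l)))"
      by (rule triple_swap)
    also have "\<dots> = mon k w \<alpha> * (\<Sum>l\<in>L. J $$ (j, l) * (\<Sum>a\<in>P. \<Sum>b\<in>Q. v a * w b * A a b l))"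
      by (simp only: sum_distrib_left)
    finally show ?thesis unfolding P_def Q_def L_def .
  qed
  also have "\<dots> = 0" using hA by simp
  finally show ?thesis .
qed

theorem mainTheorem2:
  fixes n k :: nat and J :: "complex mat" and A :: "nat \<Rightarrow> nat \<Rightarrow> nat \<Rightarrow> complex"
    and r c :: "nat \<Rightarrow> nat \<times> (nat \<Rightarrow> nat)"
  assumes "n \<ge> 1" and "k \<ge> 1"
    and "is_symplectic_form (2*n+2*k) J"
    and "bij_betw r {..<card (Delta_rows n k)} (Delta_rows n k)"
    and "bij_betw c {..<card (Delta_rows n k)} (Delta_cols n k)"
    and "degenerate n k A"
  shows "det (Delta_mat n k J A r c) = 0"
proof -
  let ?N = "card (Delta_rows n k)"
  let ?M = "Delta_mat n k J A r c"
  obtain v w where v: "\<exists>a<2*n+2. v a \<noteq> 0" and w: "\<exists>b<k. w b \<noteq> 0"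
    and hA: "\<forall>j<2*n+2*k. (\<Sum>a<2*n+2. \<Sum>b<k. v a * w b * A a b j) = 0"
    using assms(6) unfolding degenerate_def by blast
  define f where "f = (\<lambda>y::nat \<times> (nat \<Rightarrow> nat). v (fst y) * mon k w (snd y))"
  have Mc: "?M \<in> carrier_mat ?N ?N" unfolding Delta_mat_def Let_def by simp
  have TMc: "transpose_mat ?M \<in> carrier_mat ?N ?N" using Mc by simp
  define y where "y = vec ?N (\<lambda>i. f (r i))"
  have yc: "y \<in> carrier_vec ?N" unfolding y_def by simp
  have prod0: "transpose_mat ?M *\<^sub>v y = 0\<^sub>v ?N"
  proof (rule eq_vecI)
    fix i' assume i': "i' < dim_vec (0\<^sub>v ?N :: complex vec)"
    then have i'N: "i' < ?N" by simp
    have "(transpose_mat ?M *\<^sub>v y) $ i' = (\<Sum>i<?N. Delta_entry (2*n+2*k) k J A (r i) (c i') * f (r i))"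
      using i'N Mc unfolding y_def scalar_prod_def
      by (auto simp: Delta_mat_def Let_def lessThan_atLeast0 scalar_prod_def intro!: sum.cong)
    also have "\<dots> = (\<Sum>y\<in>Delta_rows n k. Delta_entry (2*n+2*k) k J A y (c i') * f y)"
      by (rule sum.reindex_bij_betw[OF assms(4), of "\<lambda>y. Delta_entry (2*n+2*k) k J A y (c i') * f y"])
    also have "\<dots> = 0" unfolding f_def
      by (rule key[OF _ hA]) (use assms(5) i'N bij_betwE in blast)
    finally show "(transpose_mat ?M *\<^sub>v y) $ i' = 0\<^sub>v ?N $ i'" using i'N by simp
  qed (use TMc in simp)
  obtain a0 where a0: "a0 < 2*n+2" "v a0 \<noteq> 0" using v by blast
  obtain b0 where b0: "b0 < k" "w b0 \<noteq> 0" using w by blast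
  define \<beta>0 where "\<beta>0 = (\<lambda>b. if b = b0 then n + 1 else (0::nat))"
  have "\<beta>0 \<in> multi_idx k (n+1)" unfolding multi_idx_def \<beta>0_def using b0
    by (auto simp: sum.delta)
  then have "(a0, \<beta>0) \<in> Delta_rows n k" unfolding Delta_rows_def using a0 by auto
  then obtain i where i: "i < ?N" "r i = (a0, \<beta>0)"
    using assms(4) by (metis bij_betw_iff_bijections lessThan_iff)
  have "mon k w \<beta>0 = (\<Prod>b<k. if b = b0 then w b0 ^ (n+1) else 1)"
    unfolding mon_def \<beta>0_def by (rule prod.cong) auto
  also have "\<dots> = w b0 ^ (n+1)" using b0 by (simp add: prod.delta)
  finally have "f (r i) \<noteq> 0" using i a0 b0 unfolding f_def by simp
  then have "y $ i \<noteq> 0" using i unfolding y_def by simp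
  then have "y \<noteq> 0\<^sub>v ?N" using i by auto
  then have "det (transpose_mat ?M) = 0"
    using det_0_iff_vec_prod_zero_field[OF TMc] yc prod0 by blast
  then show ?thesis using det_transpose[OF Mc] by simp
qed

end
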